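(* Let $A$ be a non-negative, irreducible $d\times d$ matrix with $\rho(A)>1$. Suppose $X$ is a local minimum of problem (P) and that the leading eigenvalue $1$ of $X$ is simple. Let $\mathbf u,\mathbf v\ge0$ be a left and a right leading eigenvector of $X$, i.e. $\mathbf u^TX=\mathbf u^T$ and $X\mathbf v=\mathbf v$. Then there exist a number $r>0$ and a non-negative matrix $\Lambda$ with $\Lambda\perp X$ such that $$A=X+r\,\mathbf u\,\mathbf v^T-\Lambda .$$
   Context: $\rho(\cdot)$ denotes spectral radius and $\|\cdot\|$ the Frobenius norm. The matrix inner product is $(X,Y)=\operatorname{tr}(X^TY)$, and $X\perp Y$ means $(X,Y)=0$; for non-negative matrices $\Lambda\perp X$ means $\Lambda$ vanishes wherever $X$ is positive. Problem (P) for a non-negative square matrix $A$ is: minimize $\|X-A\|$ subject to $X\ge0$ (entrywise) and $\rho(X)\le1$. A local minimum of (P) is a feasible $X$ for which there is a neighbourhood $U$ of $X$ with $\|Y-A\|\ge\|X-A\|$ for all feasible $Y\in U$. By Perron–Frobenius, a non-negative matrix has a non-negative eigenvector for the eigenvalue $\rho(X)$; this eigenvalue is called leading and the eigenvector a leading eigenvector. *)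

theory Defs
  imports "Jordan_Normal_Form.Spectral_Radius"
begin

definition nonneg_mat :: "real mat \<Rightarrow> bool" where
  "nonneg_mat X = (\<forall>i < dim_row X. \<forall>j < dim_col X. X $$ (i, j) \<ge> 0)"

definition nonneg_vec :: "real vec \<Rightarrow> bool" where
  "nonneg_vec x = (\<forall>i < dim_vec x. x $ i \<ge> 0)"

definition spec_rad :: "real mat \<Rightarrow> real" where
  "spec_rad X = spectral_radius (map_mat complex_of_real X)"

definition frob_norm :: "real mat \<Rightarrow> real" where
  "frob_norm X = sqrt (\<Sum>i < dim_row X. \<Sum>j < dim_col X. (X $$ (i, j))^2)"

definition irreducible_mat :: "real mat \<Rightarrow> bool" where
  "irreducible_mat A = (\<forall>i < dim_row A. \<forall>j < dim_row A. \<exists>k. (A ^\<^sub>m k) $$ (i, j) > 0)"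

definition feasible_P :: "nat \<Rightarrow> real mat \<Rightarrow> bool" where
  "feasible_P d X = (X \<in> carrier_mat d d \<and> nonneg_mat X \<and> spec_rad X \<le> 1)"

definition local_min_P :: "nat \<Rightarrow> real mat \<Rightarrow> real mat \<Rightarrow> bool" where
  "local_min_P d A X = (feasible_P d X \<and>
     (\<exists>e > 0. \<forall>Y. feasible_P d Y \<and> frob_norm (Y - X) < e \<longrightarrow>
        frob_norm (X - A) \<le> frob_norm (Y - A)))"

definition perp_nonneg :: "real mat \<Rightarrow> real mat \<Rightarrow> bool" where
  "perp_nonneg L X = (\<forall>i < dim_row X. \<forall>j < dim_col X. X $$ (i, j) > 0 \<longrightarrow> L $$ (i, j) = 0)"

definition outer_prod :: "real vec \<Rightarrow> real vec \<Rightarrow> real mat" where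
  "outer_prod u v = mat (dim_vec u) (dim_vec v) (\<lambda>(i, j). u $ i * v $ j)"

end

theory Submission
  imports Defs
begin

definition Nprime :: "real mat \<Rightarrow> nat \<Rightarrow> nat \<Rightarrow> real mat" where
  "Nprime N d i0 = mat d d (\<lambda>(a,b). if a = i0 \<or> b = i0 then (if a = b then 1 else 0) else N $$ (a,b))"

lemma Nprime_carrier: "Nprime N d i0 \<in> carrier_mat d d" unfolding Nprime_def by auto

lemma Nprime_det:
  assumes N: "N \<in> carrier_mat d d" and i0: "i0 < d"
  shows "det (Nprime N d i0) = det (mat_delete N i0 i0)"
proof -
  let ?M = "Nprime N d i0"
  have "det ?M = (\<Sum>j<d. ?M $$ (i0,j) * cofactor ?M i0 j)"
    by (rule laplace_expansion_row[OF Nprime_carrier i0])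
  also have "\<dots> = (\<Sum>j<d. if j = i0 then cofactor ?M i0 i0 else 0)"
    by (rule sum.cong, auto simp: Nprime_def i0)
  also have "\<dots> = cofactor ?M i0 i0" using i0 by simp
  also have "\<dots> = det (mat_delete ?M i0 i0)" unfolding cofactor_def
    by (simp add: power_add[symmetric] flip: mult_2)
  also have "mat_delete ?M i0 i0 = mat_delete N i0 i0"
    using N i0 by (intro eq_matI) (auto simp: mat_delete_def Nprime_def)
  finally show ?thesis .
qed

lemma Nprime_mult:
  assumes N: "N \<in> carrier_mat d d" and i0: "i0 < d" and y: "y \<in> carrier_vec d"
    and y0: "y $ i0 = 0" and a: "a < d" "a \<noteq> i0"
  shows "(Nprime N d i0 *\<^sub>v y) $ a = (N *\<^sub>v y) $ a"
proof -
  have "(Nprime N d i0 *\<^sub>v y) $ a = (\<Sum>b<d. Nprime N d i0 $$ (a,b) * y $ b)"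
    using a y by (auto simp: scalar_prod_def Nprime_def lessThan_atLeast0)
  also have "\<dots> = (\<Sum>b<d. N $$ (a,b) * y $ b)"
    by (rule sum.cong, insert a y0, auto simp: Nprime_def)
  also have "\<dots> = (N *\<^sub>v y) $ a"
    using a y N by (auto simp: scalar_prod_def lessThan_atLeast0)
  finally show ?thesis .
qed

lemma minor_kernel:
  fixes N :: "real mat"
  assumes N: "N \<in> carrier_mat d d" and i0: "i0 < d" and nz: "det (mat_delete N i0 i0) \<noteq> 0"
    and y: "y \<in> carrier_vec d" and Ny: "N *\<^sub>v y = 0\<^sub>v d" and y0: "y $ i0 = 0"
  shows "y = 0\<^sub>v d"
proof (rule ccontr)
  assume ne: "y \<noteq> 0\<^sub>v d"
  have "Nprime N d i0 *\<^sub>v y = 0\<^sub>v d"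
  proof (rule eq_vecI)
    fix a assume a: "a < dim_vec (0\<^sub>v d :: real vec)"
    hence a: "a < d" by simp
    show "(Nprime N d i0 *\<^sub>v y) $ a = 0\<^sub>v d $ a"
    proof (cases "a = i0")
      case True
      have "(Nprime N d i0 *\<^sub>v y) $ a = (\<Sum>b<d. Nprime N d i0 $$ (a,b) * y $ b)"
        using a y by (auto simp: scalar_prod_def Nprime_def lessThan_atLeast0)
      also have "\<dots> = (\<Sum>b<d. 0)"
        by (rule sum.cong, insert True y0 i0, auto simp: Nprime_def)
      finally show ?thesis using a by simp
    next
      case False
      show ?thesis using Nprime_mult[OF N i0 y y0 a False] Ny a by simp
    qed
  qed (simp add: Nprime_def)
  hence "det (Nprime N d i0) = 0"
    using det_0_iff_vec_prod_zero[OF Nprime_carrier] y ne by blast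
  thus False using Nprime_det[OF N i0] nz by simp
qed

lemma minor_solve:
  fixes N :: "real mat"
  assumes N: "N \<in> carrier_mat d d" and i0: "i0 < d" and nz: "det (mat_delete N i0 i0) \<noteq> 0"
    and b: "b \<in> carrier_vec d"
  shows "\<exists>z \<in> carrier_vec d. z $ i0 = 0 \<and> (\<forall>a<d. a \<noteq> i0 \<longrightarrow> (N *\<^sub>v z) $ a = b $ a)"
proof -
  let ?M = "Nprime N d i0"
  define b' where "b' = vec d (\<lambda>a. if a = i0 then 0 else b $ a)"
  define D where "D = det ?M"
  have D: "D \<noteq> 0" using Nprime_det[OF N i0] nz D_def by simp
  have M: "?M \<in> carrier_mat d d" by (rule Nprime_carrier)
  have adj: "adj_mat ?M \<in> carrier_mat d d" "?M * adj_mat ?M = D \<cdot>\<^sub>m 1\<^sub>m d"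
    using adj_mat[OF M] D_def by auto
  define z where "z = (1 / D) \<cdot>\<^sub>v (adj_mat ?M *\<^sub>v b')"
  have b'c: "b' \<in> carrier_vec d" unfolding b'_def by simp
  have zc: "z \<in> carrier_vec d" unfolding z_def using adj b'c by simp
  have "?M *\<^sub>v z = (1 / D) \<cdot>\<^sub>v (?M *\<^sub>v (adj_mat ?M *\<^sub>v b'))"
    unfolding z_def using M adj b'c by (simp add: mult_mat_vec)
  also have "?M *\<^sub>v (adj_mat ?M *\<^sub>v b') = (?M * adj_mat ?M) *\<^sub>v b'"
    using assoc_mult_mat_vec[OF M adj(1) b'c] by simp
  also have "\<dots> = D \<cdot>\<^sub>v b'" unfolding adj(2) using b'c
    by (intro eq_vecI) (auto simp: scalar_prod_def if_distrib[of "\<lambda>x. D * x"] if_distrib[of "\<lambda>x. x * _"] cong: if_cong)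
  also have "(1 / D) \<cdot>\<^sub>v (D \<cdot>\<^sub>v b') = b'" using D by (intro eq_vecI) auto
  finally have Mz: "?M *\<^sub>v z = b'" .
  have z0: "z $ i0 = 0"
  proof -
    have "(?M *\<^sub>v z) $ i0 = (\<Sum>b<d. ?M $$ (i0,b) * z $ b)"
      using i0 zc by (auto simp: scalar_prod_def Nprime_def lessThan_atLeast0)
    also have "\<dots> = (\<Sum>b<d. if b = i0 then z $ i0 else 0)"
      by (rule sum.cong, auto simp: Nprime_def i0)
    also have "\<dots> = z $ i0" using i0 by simp
    finally show ?thesis using Mz i0 unfolding b'_def by simp
  qed
  show ?thesis
  proof (intro bexI[OF _ zc] conjI z0 allI impI)
    fix a assume a: "a < d" "a \<noteq> i0"
    show "(N *\<^sub>v z) $ a = b $ a"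
      using Nprime_mult[OF N i0 zc z0 a] Mz a unfolding b'_def by simp
  qed
qed

lemma mat_delete_N:
  fixes X :: "real mat"
  assumes X: "X \<in> carrier_mat d d" and i: "i < d"
  shows "mat_delete (1\<^sub>m d - X) i i = - char_matrix (mat_delete X i i) 1"
  using X i by (intro eq_matI) (auto simp: mat_delete_def char_matrix_def)

lemma sum_minors_nonzero:
  fixes X :: "real mat"
  assumes X: "X \<in> carrier_mat d d" and d: "d > 0"
    and simple: "order 1 (char_poly X) = 1"
  shows "(\<Sum>i<d. det (mat_delete (1\<^sub>m d - X) i i)) \<noteq> 0"
proof -
  have deg: "degree (char_poly X) = d" using degree_monic_char_poly[OF X] by auto
  have pd: "pderiv (char_poly X) \<noteq> 0" using deg d by (simp add: pderiv_eq_0_iff)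
  have "order 1 (pderiv (char_poly X)) = 0"
    using order_pderiv2[OF pd, of 1 0] simple by auto
  hence nz: "poly (pderiv (char_poly X)) 1 \<noteq> 0" using pd order_root by blast
  have "poly (pderiv (char_poly X)) 1 = (\<Sum>i<d. poly (char_poly (mat_delete X i i)) 1)"
    unfolding pderiv_char_poly[OF X] poly_sum ..
  also have "\<dots> = (\<Sum>i<d. det (mat_delete (1\<^sub>m d - X) i i))"
  proof (rule sum.cong[OF refl])
    fix i assume "i \<in> {..<d}"
    hence i: "i < d" by auto
    have c: "mat_delete X i i \<in> carrier_mat (d-1) (d-1)" using mat_delete_carrier[OF X] .
    show "poly (char_poly (mat_delete X i i)) 1 = det (mat_delete (1\<^sub>m d - X) i i)"
      unfolding char_poly_matrix[OF c] mat_delete_N[OF X i] ..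
  qed
  finally show ?thesis using nz by simp
qed

lemma scalar_prod_transpose:
  fixes N :: "real mat"
  assumes N: "N \<in> carrier_mat d d" and u: "u \<in> carrier_vec d" and z: "z \<in> carrier_vec d"
  shows "u \<bullet> (N *\<^sub>v z) = (transpose_mat N *\<^sub>v u) \<bullet> z"
proof -
  have "u \<bullet> (N *\<^sub>v z) = (\<Sum>a<d. u $ a * (\<Sum>b<d. N $$ (a,b) * z $ b))"
    using N u z by (auto simp: scalar_prod_def lessThan_atLeast0)
  also have "\<dots> = (\<Sum>a<d. \<Sum>b<d. u $ a * N $$ (a,b) * z $ b)"
    by (simp add: sum_distrib_left mult.assoc)
  also have "\<dots> = (\<Sum>b<d. \<Sum>a<d. u $ a * N $$ (a,b) * z $ b)"
    by (rule sum.swap)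
  also have "\<dots> = (\<Sum>b<d. (\<Sum>a<d. N $$ (a,b) * u $ a) * z $ b)"
    by (simp add: sum_distrib_right sum_distrib_left mult_ac)
  also have "\<dots> = (transpose_mat N *\<^sub>v u) \<bullet> z"
    using N u z by (auto simp: scalar_prod_def lessThan_atLeast0)
  finally show ?thesis .
qed

lemma simple_eig_facts:
  fixes X :: "real mat"
  assumes X: "X \<in> carrier_mat d d" and d: "d > 0" and simple: "order 1 (char_poly X) = 1"
    and u: "u \<in> carrier_vec d" "u \<noteq> 0\<^sub>v d" "transpose_mat X *\<^sub>v u = u"
    and v: "v \<in> carrier_vec d" "v \<noteq> 0\<^sub>v d" "X *\<^sub>v v = v"
  shows "u \<bullet> v \<noteq> 0"
    and "\<And>b. b \<in> carrier_vec d \<Longrightarrow> u \<bullet> b = 0 \<Longrightarrow> \<exists>z\<in>carrier_vec d. z - X *\<^sub>v z = b"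
proof -
  define N where "N = 1\<^sub>m d - X"
  have N: "N \<in> carrier_mat d d" unfolding N_def using X by auto
  define NT where "NT = transpose_mat N"
  have NT: "NT \<in> carrier_mat d d" unfolding NT_def using N by auto
  have NTe: "NT = 1\<^sub>m d - transpose_mat X" unfolding NT_def N_def using X
    by (intro eq_matI) auto
  have NXv: "\<And>z. z \<in> carrier_vec d \<Longrightarrow> N *\<^sub>v z = z - X *\<^sub>v z"
    unfolding N_def using minus_mult_distrib_mat_vec[OF one_carrier_mat X] by simp
  have Nv: "N *\<^sub>v v = 0\<^sub>v d" using NXv[OF v(1)] v(3) v(1) by simp
  have NTu: "NT *\<^sub>v u = 0\<^sub>v d" unfolding NTe
    using minus_mult_distrib_mat_vec[OF one_carrier_mat transpose_carrier_mat[THEN iffD2, OF X] u(1)] u by simp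
  from sum_minors_nonzero[OF X d simple, folded N_def]
  obtain i0 where i0: "i0 < d" and nz: "det (mat_delete N i0 i0) \<noteq> 0"
    by (metis (no_types, lifting) lessThan_iff sum.neutral)
  have nzT: "det (mat_delete NT i0 i0) \<noteq> 0"
  proof -
    have "mat_delete NT i0 i0 = transpose_mat (mat_delete N i0 i0)"
      unfolding NT_def using N by (intro eq_matI) (auto simp: mat_delete_def)
    moreover have "mat_delete N i0 i0 \<in> carrier_mat (d-1) (d-1)" using mat_delete_carrier[OF N] .
    ultimately show ?thesis using det_transpose nz by metis
  qed
  have vi0: "v $ i0 \<noteq> 0" using minor_kernel[OF N i0 nz v(1) Nv] v(2) by auto
  have ui0: "u $ i0 \<noteq> 0" using minor_kernel[OF NT i0 nzT u(1) NTu] u(2) by auto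
  show "\<And>b. b \<in> carrier_vec d \<Longrightarrow> u \<bullet> b = 0 \<Longrightarrow> \<exists>z\<in>carrier_vec d. z - X *\<^sub>v z = b"
  proof -
    fix b :: "real vec" assume b: "b \<in> carrier_vec d" and ub: "u \<bullet> b = 0"
    from minor_solve[OF N i0 nz b] obtain z where z: "z \<in> carrier_vec d"
      and eq: "\<And>a. a < d \<Longrightarrow> a \<noteq> i0 \<Longrightarrow> (N *\<^sub>v z) $ a = b $ a" by auto
    have "u \<bullet> (N *\<^sub>v z) = 0"
      unfolding scalar_prod_transpose[OF N u(1) z] NT_def[symmetric] NTu using z by simp
    hence s1: "(\<Sum>a<d. u $ a * (N *\<^sub>v z) $ a) = (\<Sum>a<d. u $ a * b $ a)"
      using ub N b u(1) z by (auto simp: scalar_prod_def lessThan_atLeast0)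
    have split: "\<And>f. (\<Sum>a<d. f a) = f i0 + (\<Sum>a\<in>{..<d} - {i0}. f a)"
      using i0 by (meson finite_lessThan lessThan_iff sum.remove)
    have "(\<Sum>a\<in>{..<d} - {i0}. u $ a * (N *\<^sub>v z) $ a) = (\<Sum>a\<in>{..<d} - {i0}. u $ a * b $ a)"
      using eq by (intro sum.cong) auto
    hence "u $ i0 * (N *\<^sub>v z) $ i0 = u $ i0 * b $ i0" using s1 split[of "\<lambda>a. u $ a * (N *\<^sub>v z) $ a"]
      split[of "\<lambda>a. u $ a * b $ a"] by linarith
    hence "(N *\<^sub>v z) $ i0 = b $ i0" using ui0 by simp
    hence "N *\<^sub>v z = b"
    proof (intro eq_vecI)
      fix a assume "a < dim_vec b"
      hence a: "a < d" using b by simp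
      show "(N *\<^sub>v z) $ a = b $ a" if "(N *\<^sub>v z) $ i0 = b $ i0"
        using that eq[OF a] by (cases "a = i0") auto
    qed (use N b in auto)
    thus "\<exists>z\<in>carrier_vec d. z - X *\<^sub>v z = b" using NXv[OF z] z by auto
  qed
  define M where "M = adj_mat N"
  have M: "M \<in> carrier_mat d d" unfolding M_def using adj_mat[OF N] by auto
  have detN: "det N = 0" using det_0_iff_vec_prod_zero[OF N] v(1,2) Nv by auto
  have z0: "(0::real) \<cdot>\<^sub>m 1\<^sub>m d = 0\<^sub>m d d" by (intro eq_matI) auto
  have NM: "N * M = 0\<^sub>m d d" unfolding M_def using adj_mat[OF N] detN z0 by simp
  have MN: "M * N = 0\<^sub>m d d" unfolding M_def using adj_mat[OF N] detN z0 by simp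
  have colM: "M $$ (i,j) = M $$ (i0,j) * v $ i / v $ i0" if ij: "i < d" "j < d" for i j
  proof -
    define y where "y = col M j - (M $$ (i0,j) / v $ i0) \<cdot>\<^sub>v v"
    have yc: "y \<in> carrier_vec d" unfolding y_def using M v(1) by auto
    have "N *\<^sub>v col M j = 0\<^sub>v d"
    proof (rule eq_vecI)
      fix a assume "a < dim_vec (0\<^sub>v d :: real vec)"
      hence a: "a < d" by simp
      have "(N *\<^sub>v col M j) $ a = row N a \<bullet> col M j"
        by (rule index_mult_mat_vec, use N a in simp)
      also have "\<dots> = (N * M) $$ (a,j)"
        by (rule index_mult_mat(1)[symmetric], use N M a ij in auto)
      finally have "(N *\<^sub>v col M j) $ a = (N * M) $$ (a,j)" .
      thus "(N *\<^sub>v col M j) $ a = 0\<^sub>v d $ a" unfolding NM using a ij by simp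
    qed (use N in simp)
    have "N *\<^sub>v y = 0\<^sub>v d - (M $$ (i0,j) / v $ i0) \<cdot>\<^sub>v 0\<^sub>v d"
    proof -
      have cc: "col M j \<in> carrier_vec d" unfolding carrier_vec_def using carrier_matD(1)[OF M] by simp
      have "N *\<^sub>v y = N *\<^sub>v col M j - N *\<^sub>v ((M $$ (i0,j) / v $ i0) \<cdot>\<^sub>v v)"
        unfolding y_def by (rule mult_minus_distrib_mat_vec[OF N cc], use v(1) in simp)
      also have "N *\<^sub>v ((M $$ (i0,j) / v $ i0) \<cdot>\<^sub>v v) = (M $$ (i0,j) / v $ i0) \<cdot>\<^sub>v 0\<^sub>v d"
        unfolding mult_mat_vec[OF N v(1)] Nv ..
      finally show ?thesis using \<open>N *\<^sub>v col M j = 0\<^sub>v d\<close> by simp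
    qed
    also have "\<dots> = 0\<^sub>v d" by (intro eq_vecI) auto
    finally have "N *\<^sub>v y = 0\<^sub>v d" .
    moreover have "y $ i0 = 0" unfolding y_def using i0 ij M v(1) vi0 by simp
    ultimately have "y = 0\<^sub>v d" using minor_kernel[OF N i0 nz yc] by simp
    hence "y $ i = 0" using ij by simp
    thus ?thesis unfolding y_def using ij M v(1) vi0 by (simp add: field_simps)
  qed
  have rowM: "M $$ (i,j) = M $$ (i,i0) * u $ j / u $ i0" if ij: "i < d" "j < d" for i j
  proof -
    define y where "y = row M i - (M $$ (i,i0) / u $ i0) \<cdot>\<^sub>v u"
    have yc: "y \<in> carrier_vec d" unfolding y_def using M u(1) by auto
    have "NT *\<^sub>v row M i = 0\<^sub>v d"
    proof (rule eq_vecI)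
      fix a assume "a < dim_vec (0\<^sub>v d :: real vec)"
      hence a: "a < d" by simp
      have "(NT *\<^sub>v row M i) $ a = row NT a \<bullet> row M i"
        by (rule index_mult_mat_vec, use NT a in simp)
      also have "row NT a = col N a" unfolding NT_def by (rule row_transpose, use N a in simp)
      also have "col N a \<bullet> row M i = row M i \<bullet> col N a"
        by (rule comm_scalar_prod[of _ d], use N M a ij in auto)
      also have "\<dots> = (M * N) $$ (i,a)"
        by (rule index_mult_mat(1)[symmetric], use N M a ij in auto)
      finally have "(NT *\<^sub>v row M i) $ a = (M * N) $$ (i,a)" .
      thus "(NT *\<^sub>v row M i) $ a = 0\<^sub>v d $ a" unfolding MN using a ij by simp
    qed (use NT in simp)
    have "NT *\<^sub>v y = 0\<^sub>v d - (M $$ (i,i0) / u $ i0) \<cdot>\<^sub>v 0\<^sub>v d"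
    proof -
      have cc: "row M i \<in> carrier_vec d" unfolding carrier_vec_def using carrier_matD(2)[OF M] by simp
      have "NT *\<^sub>v y = NT *\<^sub>v row M i - NT *\<^sub>v ((M $$ (i,i0) / u $ i0) \<cdot>\<^sub>v u)"
        unfolding y_def by (rule mult_minus_distrib_mat_vec[OF NT cc], use u(1) in simp)
      also have "NT *\<^sub>v ((M $$ (i,i0) / u $ i0) \<cdot>\<^sub>v u) = (M $$ (i,i0) / u $ i0) \<cdot>\<^sub>v 0\<^sub>v d"
        unfolding mult_mat_vec[OF NT u(1)] NTu ..
      finally show ?thesis using \<open>NT *\<^sub>v row M i = 0\<^sub>v d\<close> by simp
    qed
    also have "\<dots> = 0\<^sub>v d" by (intro eq_vecI) auto
    finally have "NT *\<^sub>v y = 0\<^sub>v d" .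
    moreover have "y $ i0 = 0" unfolding y_def using i0 ij M u(1) ui0 by simp
    ultimately have "y = 0\<^sub>v d" using minor_kernel[OF NT i0 nzT yc] by simp
    hence "y $ j = 0" using ij by simp
    thus ?thesis unfolding y_def using ij M u(1) ui0 by (simp add: field_simps)
  qed
  have diag: "M $$ (i,i) = det (mat_delete N i i)" if "i < d" for i
    unfolding M_def adj_mat_def cofactor_def using that N
    by (simp add: power_add[symmetric] flip: mult_2)
  have "(\<Sum>i<d. det (mat_delete N i i)) = (\<Sum>i<d. (M $$ (i0,i0) / (u $ i0 * v $ i0)) * (u $ i * v $ i))"
  proof (rule sum.cong[OF refl])
    fix i assume "i \<in> {..<d}"
    hence i: "i < d" by simp
    show "det (mat_delete N i i) = (M $$ (i0,i0) / (u $ i0 * v $ i0)) * (u $ i * v $ i)"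
      unfolding diag[OF i, symmetric] colM[OF i i] rowM[OF i0 i] using ui0 vi0
      by (simp add: field_simps)
  qed
  also have "\<dots> = (M $$ (i0,i0) / (u $ i0 * v $ i0)) * (u \<bullet> v)"
    using u(1) v(1) by (simp add: scalar_prod_def sum_distrib_left lessThan_atLeast0)
  finally show "u \<bullet> v \<noteq> 0" using sum_minors_nonzero[OF X d simple, folded N_def] by auto
qed

lemma mat_mult_entry:
  fixes A B :: "'a :: comm_ring_1 mat"
  assumes A: "A \<in> carrier_mat n m" and B: "B \<in> carrier_mat m k" and i: "i < n" and l: "l < k"
  shows "(A * B) $$ (i,l) = (\<Sum>j<m. A $$ (i,j) * B $$ (j,l))"
  using A B i l by (auto simp: scalar_prod_def lessThan_atLeast0 intro: sum.cong)

lemma mat_vec_entry: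
  fixes A :: "'a :: comm_ring_1 mat"
  assumes A: "A \<in> carrier_mat n m" and v: "v \<in> carrier_vec m" and i: "i < n"
  shows "(A *\<^sub>v v) $ i = (\<Sum>j<m. A $$ (i,j) * v $ j)"
  using A v i by (auto simp: scalar_prod_def lessThan_atLeast0 intro: sum.cong)

lemma pow_mat_Suc_left:
  fixes A :: "'a :: semiring_1 mat"
  assumes A: "A \<in> carrier_mat n n"
  shows "A ^\<^sub>m Suc k = A * A ^\<^sub>m k"
proof (induct k)
  case 0 show ?case using A by simp
next
  case (Suc k)
  have "A ^\<^sub>m Suc (Suc k) = A ^\<^sub>m Suc k * A" by simp
  also have "\<dots> = (A * A ^\<^sub>m k) * A" using Suc by simp
  also have "\<dots> = A * (A ^\<^sub>m k * A)" using A by (simp add: assoc_mult_mat[of _ n n _ n _ n])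
  finally show ?case by simp
qed

lemma pow_nonneg:
  fixes X :: "real mat"
  assumes X: "X \<in> carrier_mat d d" and nn: "\<And>i j. i < d \<Longrightarrow> j < d \<Longrightarrow> X $$ (i,j) \<ge> 0"
  shows "i < d \<Longrightarrow> j < d \<Longrightarrow> (X ^\<^sub>m k) $$ (i,j) \<ge> 0"
proof (induct k arbitrary: i j)
  case 0 thus ?case using X by simp
next
  case (Suc k)
  have "(X ^\<^sub>m Suc k) $$ (i,j) = (\<Sum>l<d. (X ^\<^sub>m k) $$ (i,l) * X $$ (l,j))"
    using mat_mult_entry[OF pow_carrier_mat[OF X] X Suc(2,3)] by simp
  also have "\<dots> \<ge> 0" using Suc nn by (intro sum_nonneg mult_nonneg_nonneg) auto
  finally show ?case .
qed

lemma spec_rad_cert: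
  fixes Y :: "real mat"
  assumes Y: "Y \<in> carrier_mat d d" and d: "d > 0"
    and nn: "\<And>i j. i < d \<Longrightarrow> j < d \<Longrightarrow> Y $$ (i,j) \<ge> 0"
    and wpos: "\<And>i. i < d \<Longrightarrow> w i > 0"
    and Yw: "\<And>i. i < d \<Longrightarrow> (\<Sum>j<d. Y $$ (i,j) * w j) \<le> w i"
  shows "spec_rad Y \<le> 1"
proof -
  define YC where "YC = map_mat complex_of_real Y"
  have YC: "YC \<in> carrier_mat d d" unfolding YC_def using Y by auto
  have fin: "finite (spectrum YC)" using card_finite_spectrum[OF YC] by auto
  have ne: "spectrum YC \<noteq> {}" using spectrum_non_empty[OF YC d] .
  have ev_le: "norm ev \<le> 1" if ev: "ev \<in> spectrum YC" for ev
  proof -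
    from ev obtain x where x: "eigenvector YC x ev"
      unfolding spectrum_def eigenvalue_def by auto
    hence xc: "x \<in> carrier_vec d" and xn: "x \<noteq> 0\<^sub>v d" and Yx: "YC *\<^sub>v x = ev \<cdot>\<^sub>v x"
      unfolding eigenvector_def using YC by auto
    define f where "f i = norm (x $ i) / w i" for i
    define m where "m = Max (f ` {..<d})"
    have fm: "f i \<le> m" if "i < d" for i unfolding m_def using that by auto
    have "m \<in> f ` {..<d}" unfolding m_def using d by (intro Max_in) auto
    then obtain i0 where i0: "i0 < d" "f i0 = m" by auto
    have xle: "norm (x $ j) \<le> m * w j" if "j < d" for j
      using fm[OF that] wpos[OF that] unfolding f_def by (simp add: field_simps)
    obtain j0 where j0: "j0 < d" "x $ j0 \<noteq> 0"
      using xn xc by (metis carrier_vecD eq_vecI index_zero_vec(1) index_zero_vec(2))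
    have "m > 0" using fm[OF j0(1)] wpos[OF j0(1)] j0(2) unfolding f_def
      by (smt (verit) divide_pos_pos zero_less_norm_iff)
    have xi0: "norm (x $ i0) = m * w i0" using i0 wpos[OF i0(1)] unfolding f_def by (auto simp: field_simps)
    have "ev * x $ i0 = (YC *\<^sub>v x) $ i0" using Yx i0 xc by simp
    also have "\<dots> = (\<Sum>j<d. YC $$ (i0,j) * x $ j)" by (rule mat_vec_entry[OF YC xc i0(1)])
    finally have eq: "ev * x $ i0 = (\<Sum>j<d. complex_of_real (Y $$ (i0,j)) * x $ j)"
      unfolding YC_def using Y i0 by simp
    have "norm ev * norm (x $ i0) = norm (\<Sum>j<d. complex_of_real (Y $$ (i0,j)) * x $ j)"
      unfolding eq[symmetric] norm_mult ..
    also have "\<dots> \<le> (\<Sum>j<d. norm (complex_of_real (Y $$ (i0,j)) * x $ j))"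
      by (rule norm_sum)
    also have "\<dots> = (\<Sum>j<d. Y $$ (i0,j) * norm (x $ j))"
      using nn i0 by (intro sum.cong) (auto simp: norm_mult)
    also have "\<dots> \<le> (\<Sum>j<d. Y $$ (i0,j) * (m * w j))"
      using nn i0 xle by (intro sum_mono mult_left_mono) auto
    also have "\<dots> = m * (\<Sum>j<d. Y $$ (i0,j) * w j)"
      by (simp add: sum_distrib_left mult_ac)
    also have "\<dots> \<le> m * w i0" using Yw[OF i0(1)] \<open>m > 0\<close> by simp
    also have "\<dots> = norm (x $ i0)" using xi0 by simp
    finally have "norm ev * norm (x $ i0) \<le> 1 * norm (x $ i0)" by simp
    moreover have "norm (x $ i0) > 0" using xi0 \<open>m > 0\<close> wpos[OF i0(1)] by simp
    ultimately show ?thesis by (meson mult_le_cancel_right_pos)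
  qed
  show ?thesis unfolding spec_rad_def spectral_radius_def YC_def[symmetric]
    using fin ne ev_le by (simp add: Max_le_iff)
qed

lemma pow_bound:
  fixes X :: "real mat"
  assumes X: "X \<in> carrier_mat d d" and rho: "spec_rad X \<le> 1"
  shows "\<exists>c1 c2. \<forall>k i j. i < d \<longrightarrow> j < d \<longrightarrow> \<bar>(X ^\<^sub>m k) $$ (i,j)\<bar> \<le> c1 + c2 * real k ^ (d - 1)"
proof -
  define XC where "XC = map_mat complex_of_real X"
  have XC: "XC \<in> carrier_mat d d" unfolding XC_def using X by auto
  from spectral_radius_jnf_norm_bound_le_1_upper_triangular[OF XC] rho
  obtain c1 c2 where b: "\<And>k. norm_bound (XC ^\<^sub>m k) (c1 + c2 * real k ^ (d - 1))"
    unfolding spec_rad_def XC_def by auto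
  show ?thesis
  proof (intro exI allI impI)
    fix k i j assume ij: "i < d" "j < d"
    have "XC ^\<^sub>m k = map_mat complex_of_real (X ^\<^sub>m k)"
      unfolding XC_def by (rule of_real_hom.mat_hom_pow[OF X, symmetric])
    hence "(XC ^\<^sub>m k) $$ (i,j) = complex_of_real ((X ^\<^sub>m k) $$ (i,j))" using ij X by simp
    moreover have "norm ((XC ^\<^sub>m k) $$ (i,j)) \<le> c1 + c2 * real k ^ (d - 1)"
      using b[of k] ij XC unfolding norm_bound_def by auto
    ultimately show "\<bar>(X ^\<^sub>m k) $$ (i,j)\<bar> \<le> c1 + c2 * real k ^ (d - 1)" by simp
  qed
qed

lemma p_cert:
  fixes X :: "real mat"
  assumes X: "X \<in> carrier_mat d d"
    and nn: "\<And>i j. i < d \<Longrightarrow> j < d \<Longrightarrow> X $$ (i,j) \<ge> 0"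
    and rho: "spec_rad X \<le> 1" and eps: "\<epsilon> > 0"
  shows "\<exists>p. (\<forall>i<d. p i > 0) \<and> (\<forall>i<d. (\<Sum>j<d. X $$ (i,j) * p j) \<le> (1 + \<epsilon>) * p i)"
proof -
  obtain c1 c2 where cb: "\<And>k i j. i < d \<Longrightarrow> j < d \<Longrightarrow> \<bar>(X ^\<^sub>m k) $$ (i,j)\<bar> \<le> c1 + c2 * real k ^ (d - 1)"
    using pow_bound[OF X rho] by blast
  define q where "q n i = (\<Sum>l<d. (X ^\<^sub>m n) $$ (i,l))" for n i
  define C where "C = real d * (\<bar>c1\<bar> + \<bar>c2\<bar>)"
  have qC: "q n i \<le> C * max 1 (real n ^ (d - 1))" if i: "i < d" for n i
  proof -
    have "q n i \<le> (\<Sum>l<d. \<bar>(X ^\<^sub>m n) $$ (i,l)\<bar>)" unfolding q_def by (intro sum_mono) auto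
    also have "\<dots> \<le> (\<Sum>l<d. \<bar>c1\<bar> + \<bar>c2\<bar> * max 1 (real n ^ (d - 1)))"
    proof (intro sum_mono)
      fix l assume "l \<in> {..<d}"
      hence "\<bar>(X ^\<^sub>m n) $$ (i,l)\<bar> \<le> c1 + c2 * real n ^ (d - 1)" using cb i by auto
      also have "\<dots> \<le> \<bar>c1\<bar> + \<bar>c2\<bar> * max 1 (real n ^ (d - 1))"
      proof (rule add_mono)
        have "c2 * real n ^ (d - 1) \<le> \<bar>c2\<bar> * real n ^ (d - 1)"
          by (rule mult_right_mono) auto
        also have "\<dots> \<le> \<bar>c2\<bar> * max 1 (real n ^ (d - 1))"
          by (rule mult_left_mono) auto
        finally show "c2 * real n ^ (d - 1) \<le> \<bar>c2\<bar> * max 1 (real n ^ (d - 1))" .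
      qed auto
      finally show "\<bar>(X ^\<^sub>m n) $$ (i,l)\<bar> \<le> \<bar>c1\<bar> + \<bar>c2\<bar> * max 1 (real n ^ (d - 1))" .
    qed
    also have "\<dots> = real d * (\<bar>c1\<bar> + \<bar>c2\<bar> * max 1 (real n ^ (d - 1)))" by simp
    also have "\<dots> \<le> C * max 1 (real n ^ (d - 1))"
    proof -
      have "\<bar>c1\<bar> \<le> \<bar>c1\<bar> * max 1 (real n ^ (d - 1))"
        using mult_left_mono[of 1 "max 1 (real n ^ (d - 1))" "\<bar>c1\<bar>"] by simp
      hence "\<bar>c1\<bar> + \<bar>c2\<bar> * max 1 (real n ^ (d - 1)) \<le> (\<bar>c1\<bar> + \<bar>c2\<bar>) * max 1 (real n ^ (d - 1))"
        by (simp add: distrib_right)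
      thus ?thesis unfolding C_def by (simp add: mult_left_mono mult.assoc)
    qed
    finally show ?thesis .
  qed
  have q0: "q 0 i = 1" if "i < d" for i
    unfolding q_def using X that by (simp add: sum.If_cases)
  have qnn: "q n i \<ge> 0" if "i < d" for n i
    unfolding q_def using pow_nonneg[OF X nn] that by (intro sum_nonneg) auto
  have qS: "(\<Sum>j<d. X $$ (i,j) * q n j) = q (Suc n) i" if i: "i < d" for n i
  proof -
    have "(\<Sum>j<d. X $$ (i,j) * q n j) = (\<Sum>j<d. \<Sum>l<d. X $$ (i,j) * (X ^\<^sub>m n) $$ (j,l))"
      unfolding q_def by (simp add: sum_distrib_left)
    also have "\<dots> = (\<Sum>l<d. \<Sum>j<d. X $$ (i,j) * (X ^\<^sub>m n) $$ (j,l))" by (rule sum.swap)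
    also have "\<dots> = (\<Sum>l<d. (X * X ^\<^sub>m n) $$ (i,l))"
      using mat_mult_entry[OF X pow_carrier_mat[OF X] i] by simp
    also have "\<dots> = q (Suc n) i" unfolding q_def pow_mat_Suc_left[OF X] ..
    finally show ?thesis .
  qed
  define b where "b = 1 / (1 + \<epsilon>)"
  define b1 where "b1 = 1 / (1 + \<epsilon> / 2)"
  define b2 where "b2 = (1 + \<epsilon> / 2) / (1 + \<epsilon>)"
  have b1: "0 < b1" "b1 < 1" unfolding b1_def using eps by auto
  have b2: "0 < b2" "b2 < 1" unfolding b2_def using eps by auto
  have bb: "b = b1 * b2" unfolding b_def b1_def b2_def using eps
    by (simp add: divide_simps) (simp add: field_simps)
  have b: "0 < b" "b < 1" unfolding b_def using eps by auto
  obtain P where P: "\<And>x. C * b1 ^ x * max 1 (real x ^ (d - 1)) \<le> P"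
    using poly_exp_max_constant_bound[OF b1, of C "d - 1"] by auto
  obtain N where N: "b2 ^ N < 1 / (\<bar>P\<bar> + 1)"
  proof -
    have "\<exists>N. b2 ^ N < 1 / (\<bar>P\<bar> + 1)"
      by (rule real_arch_pow_inv) (use b2 in \<open>auto simp: add_pos_nonneg\<close>)
    thus ?thesis using that by blast
  qed
  have bN: "b ^ N * q N i \<le> 1" if i: "i < d" for i
  proof -
    have "b ^ N * q N i \<le> b ^ N * (C * max 1 (real N ^ (d - 1)))"
      using qC[OF i] b by (intro mult_left_mono) auto
    also have "\<dots> = b2 ^ N * (C * b1 ^ N * max 1 (real N ^ (d - 1)))"
      unfolding bb power_mult_distrib by (simp add: mult_ac)
    also have "\<dots> \<le> b2 ^ N * (\<bar>P\<bar> + 1)"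
      using P[of N] b2 by (intro mult_left_mono) auto
    also have "\<dots> \<le> 1" using N by (simp add: field_simps)
    finally show ?thesis .
  qed
  define p where "p i = (\<Sum>n<N. b ^ n * q n i)" for i
  have N0: "N > 0"
  proof (rule ccontr)
    assume "\<not> N > 0"
    hence "N = 0" by simp
    thus False using N by (simp add: field_simps)
  qed
  show ?thesis
  proof (intro exI conjI allI impI)
    fix i assume i: "i < d"
    have "p i = b ^ 0 * q 0 i + (\<Sum>n\<in>{..<N} - {0}. b ^ n * q n i)"
      unfolding p_def using N0 by (meson finite_lessThan lessThan_iff sum.remove)
    also have "\<dots> \<ge> 1" using q0[OF i] qnn[OF i] b by (auto intro!: sum_nonneg)
    finally show "p i > 0" by simp
  next
    fix i assume i: "i < d"
    have "(\<Sum>j<d. X $$ (i,j) * p j) = (\<Sum>n<N. b ^ n * q (Suc n) i)"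
    proof -
      have "(\<Sum>j<d. X $$ (i,j) * p j) = (\<Sum>n<N. b ^ n * (\<Sum>j<d. X $$ (i,j) * q n j))"
        unfolding p_def by (simp add: sum_distrib_left sum_distrib_right mult_ac sum.swap[of _ "{..<d}"])
      thus ?thesis using qS[OF i] by simp
    qed
    moreover have "b * (\<Sum>n<N. b ^ n * q (Suc n) i) = p i + b ^ N * q N i - 1"
    proof -
      have "b * (\<Sum>n<N. b ^ n * q (Suc n) i) = (\<Sum>n<N. b ^ Suc n * q (Suc n) i)"
        by (simp add: sum_distrib_left mult_ac)
      also have "\<dots> = (\<Sum>n<Suc N. b ^ n * q n i) - b ^ 0 * q 0 i"
        unfolding sum.lessThan_Suc_shift by simp
      also have "\<dots> = p i + b ^ N * q N i - 1" unfolding p_def using q0[OF i] by simp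
      finally show ?thesis .
    qed
    ultimately have "b * (\<Sum>j<d. X $$ (i,j) * p j) \<le> p i" using bN[OF i] by simp
    thus "(\<Sum>j<d. X $$ (i,j) * p j) \<le> (1 + \<epsilon>) * p i"
      unfolding b_def using eps by (simp add: field_simps)
  qed
qed

lemma zero_block:
  fixes X :: "real mat"
  assumes nn: "\<And>i j. i < d \<Longrightarrow> j < d \<Longrightarrow> X $$ (i,j) \<ge> 0"
    and vnn: "\<And>i. i < d \<Longrightarrow> v i \<ge> 0"
    and vfix: "\<And>i. i < d \<Longrightarrow> (\<Sum>j<d. X $$ (i,j) * v j) = v i"
    and i: "i < d" "v i = 0" and j: "j < d" "v j \<noteq> 0"
  shows "X $$ (i,j) = 0"
proof -
  have "(\<Sum>j<d. X $$ (i,j) * v j) = 0" using vfix[OF i(1)] i(2) by simp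
  moreover have "\<forall>j\<in>{..<d}. X $$ (i,j) * v j \<ge> 0" using nn vnn i by auto
  ultimately have "\<forall>j\<in>{..<d}. X $$ (i,j) * v j = 0"
    by (subst (asm) sum_nonneg_eq_0_iff) auto
  hence "X $$ (i,j) * v j = 0" using j by auto
  thus ?thesis using j by simp
qed

lemma Sc_pos:
  fixes X :: "real mat"
  assumes X: "X \<in> carrier_mat d d"
    and nn: "\<And>i j. i < d \<Longrightarrow> j < d \<Longrightarrow> X $$ (i,j) \<ge> 0"
    and rho: "spec_rad X \<le> 1"
    and vnn: "\<And>i. i < d \<Longrightarrow> v i \<ge> 0"
    and vfix: "\<And>i. i < d \<Longrightarrow> (\<Sum>j<d. X $$ (i,j) * v j) = v i"
    and zeq: "\<And>i. i < d \<Longrightarrow> z i - (\<Sum>j<d. X $$ (i,j) * z j) = bb i"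
    and bpos: "\<And>i. i < d \<Longrightarrow> v i = 0 \<Longrightarrow> bb i \<ge> \<alpha>" and \<alpha>: "\<alpha> > 0"
    and i: "i < d" "v i = 0"
  shows "z i > 0"
proof -
  have zb: "X $$ (i,j) = 0" if "i < d" "v i = 0" "j < d" "v j \<noteq> 0" for i j
    using zero_block[OF nn vnn vfix that] .
  have zge: "z i \<ge> 0" if i: "i < d" "v i = 0" for i
  proof (rule ccontr)
    assume "\<not> z i \<ge> 0"
    hence zi: "z i < 0" by simp
    define S where "S = (\<Sum>j<d. \<bar>z j\<bar>)"
    define \<epsilon> where "\<epsilon> = \<alpha> / (1 + S)"
    have S0: "S \<ge> 0" unfolding S_def by (intro sum_nonneg) auto
    have eps: "\<epsilon> > 0" unfolding \<epsilon>_def using \<alpha> S0 by simp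
    obtain p where ppos: "\<And>i. i < d \<Longrightarrow> p i > 0"
      and Xp: "\<And>i. i < d \<Longrightarrow> (\<Sum>j<d. X $$ (i,j) * p j) \<le> (1 + \<epsilon>) * p i"
      using p_cert[OF X nn rho eps] by blast
    define c where "c = {i. i < d \<and> v i = 0}"
    have cfin: "finite c" unfolding c_def by simp
    have cne: "c \<noteq> {}" unfolding c_def using i by auto
    define m where "m = Min ((\<lambda>i. z i / p i) ` c)"
    have "m \<in> (\<lambda>i. z i / p i) ` c" unfolding m_def using cfin cne by (intro Min_in) auto
    then obtain i0 where i0: "i0 < d" "v i0 = 0" "z i0 / p i0 = m" unfolding c_def by auto
    have mle: "m \<le> z j / p j" if "j < d" "v j = 0" for j
      unfolding m_def using cfin that unfolding c_def by (intro Min_le) auto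
    have "m < 0" using mle[OF i] zi ppos[OF i(1)] by (smt (verit) divide_neg_pos)
    have zj: "z j \<ge> m * p j" if "j < d" "v j = 0" for j
      using mle[OF that] ppos[OF that(1)] by (simp add: field_simps)
    have zi0: "z i0 = m * p i0" using i0 ppos[OF i0(1)] by (simp add: field_simps)
    have "m * ((1 + \<epsilon>) * p i0) \<le> m * (\<Sum>j<d. X $$ (i0,j) * p j)"
      using Xp[OF i0(1)] \<open>m < 0\<close> by (simp add: mult_le_cancel_left)
    also have "\<dots> = (\<Sum>j<d. m * (X $$ (i0,j) * p j))"
      by (simp add: sum_distrib_left)
    also have "\<dots> \<le> (\<Sum>j<d. X $$ (i0,j) * z j)"
    proof (rule sum_mono)
      fix j assume "j \<in> {..<d}"
      hence j: "j < d" by simp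
      show "m * (X $$ (i0,j) * p j) \<le> X $$ (i0,j) * z j"
      proof (cases "v j = 0")
        case True
        have "X $$ (i0,j) * (m * p j) \<le> X $$ (i0,j) * z j"
          using zj[OF j True] nn[OF i0(1) j] by (intro mult_left_mono) auto
        thus ?thesis by (simp add: mult_ac)
      next
        case False
        thus ?thesis using zb[OF i0(1,2) j False] by simp
      qed
    qed
    finally have "(\<Sum>j<d. X $$ (i0,j) * z j) \<ge> (1 + \<epsilon>) * z i0"
      unfolding zi0 by (simp add: mult_ac)
    hence "z i0 \<ge> \<alpha> + (1 + \<epsilon>) * z i0" using zeq[OF i0(1)] bpos[OF i0(1,2)] by linarith
    hence "\<epsilon> * (- z i0) \<ge> \<alpha>" by (simp add: algebra_simps)
    moreover have "- z i0 \<le> S" unfolding S_def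
      using member_le_sum[of i0 "{..<d}" "\<lambda>j. \<bar>z j\<bar>"] i0(1) by auto
    hence "\<epsilon> * (- z i0) \<le> \<epsilon> * S" using eps by (intro mult_left_mono) auto
    moreover have "\<epsilon> * S < \<alpha>" unfolding \<epsilon>_def using \<alpha> S0 by (simp add: field_simps)
    ultimately show False by linarith
  qed
  have "(\<Sum>j<d. X $$ (i,j) * z j) \<ge> 0"
  proof (rule sum_nonneg)
    fix j assume "j \<in> {..<d}"
    hence j: "j < d" by simp
    show "X $$ (i,j) * z j \<ge> 0"
    proof (cases "v j = 0")
      case True thus ?thesis using zge[OF j True] nn[OF i(1) j] by simp
    next
      case False thus ?thesis using zb[OF i j False] by simp
    qed
  qed
  thus ?thesis using zeq[OF i(1)] bpos[OF i] \<alpha> by linarith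
qed

lemma frob_norm_entries:
  assumes "M \<in> carrier_mat d d"
  shows "frob_norm M = sqrt (\<Sum>i<d. \<Sum>j<d. (M $$ (i,j))^2)"
  using assms unfolding frob_norm_def by simp

lemma key_direction:
  fixes A X H :: "real mat" and u v :: "real vec"
  assumes d: "d > 0" and A: "A \<in> carrier_mat d d"
    and locmin: "local_min_P d A X"
    and simple: "order 1 (char_poly X) = 1"
    and u: "u \<in> carrier_vec d" "nonneg_vec u" "u \<noteq> 0\<^sub>v d" "transpose_mat X *\<^sub>v u = u"
    and v: "v \<in> carrier_vec d" "nonneg_vec v" "v \<noteq> 0\<^sub>v d" "X *\<^sub>v v = v"
    and H: "H \<in> carrier_mat d d"
    and Hz: "\<And>i j. i < d \<Longrightarrow> j < d \<Longrightarrow> X $$ (i,j) = 0 \<Longrightarrow> H $$ (i,j) \<ge> 0"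
    and Hneg: "(\<Sum>i<d. \<Sum>j<d. u $ i * H $$ (i,j) * v $ j) < 0"
  shows "(\<Sum>i<d. \<Sum>j<d. (A $$ (i,j) - X $$ (i,j)) * H $$ (i,j)) \<le> 0"
proof (rule ccontr)
  define GH where "GH = (\<Sum>i<d. \<Sum>j<d. (A $$ (i,j) - X $$ (i,j)) * H $$ (i,j))"
  define HH where "HH = (\<Sum>i<d. \<Sum>j<d. (H $$ (i,j))^2)"
  assume "\<not> (\<Sum>i<d. \<Sum>j<d. (A $$ (i,j) - X $$ (i,j)) * H $$ (i,j)) \<le> 0"
  hence GHpos: "GH > 0" unfolding GH_def by simp
  from locmin have feas: "feasible_P d X"
    and "\<exists>e>0. \<forall>Y. feasible_P d Y \<and> frob_norm (Y - X) < e \<longrightarrow> frob_norm (X - A) \<le> frob_norm (Y - A)"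
    unfolding local_min_P_def by auto
  then obtain e where e: "e > 0" and lm: "\<And>Y. feasible_P d Y \<Longrightarrow> frob_norm (Y - X) < e \<Longrightarrow>
      frob_norm (X - A) \<le> frob_norm (Y - A)" by auto
  have X: "X \<in> carrier_mat d d" and rho: "spec_rad X \<le> 1"
    using feas unfolding feasible_P_def by auto
  have Xnn: "\<And>i j. i < d \<Longrightarrow> j < d \<Longrightarrow> X $$ (i,j) \<ge> 0"
    using feas X unfolding feasible_P_def nonneg_mat_def by auto
  have vnn: "\<And>i. i < d \<Longrightarrow> v $ i \<ge> 0" using v(1,2) unfolding nonneg_vec_def by auto
  have unn: "\<And>i. i < d \<Longrightarrow> u $ i \<ge> 0" using u(1,2) unfolding nonneg_vec_def by auto
  have vfix: "\<And>i. i < d \<Longrightarrow> (\<Sum>j<d. X $$ (i,j) * v $ j) = v $ i"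
    using mat_vec_entry[OF X v(1)] v(4) by metis
  obtain i1 where i1: "i1 < d" "u $ i1 \<noteq> 0"
  proof -
    have "\<exists>i<d. u $ i \<noteq> 0"
    proof (rule ccontr)
      assume "\<not> (\<exists>i<d. u $ i \<noteq> 0)"
      hence "u = 0\<^sub>v d" using u(1) by (intro eq_vecI) auto
      thus False using u(3) by simp
    qed
    thus ?thesis using that by blast
  qed
  define su where "su = (\<Sum>i<d. u $ i)"
  have su: "su > 0" unfolding su_def
    using i1 unn by (intro sum_pos2[of _ i1]) (auto simp: order.strict_iff_order)
  define uHv where "uHv = (\<Sum>i<d. \<Sum>j<d. u $ i * H $$ (i,j) * v $ j)"
  define \<alpha> where "\<alpha> = - uHv / su"
  have \<alpha>: "\<alpha> > 0" unfolding \<alpha>_def using su Hneg uHv_def by (simp add: field_simps)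
  define b where "b = vec d (\<lambda>i. (\<Sum>j<d. H $$ (i,j) * v $ j) + \<alpha>)"
  have bc: "b \<in> carrier_vec d" unfolding b_def by simp
  have ub: "u \<bullet> b = 0"
  proof -
    have "u \<bullet> b = (\<Sum>i<d. u $ i * ((\<Sum>j<d. H $$ (i,j) * v $ j) + \<alpha>))"
      unfolding b_def scalar_prod_def by (simp add: lessThan_atLeast0)
    also have "\<dots> = uHv + \<alpha> * su"
      unfolding uHv_def su_def by (simp add: algebra_simps sum.distrib sum_distrib_left)
    also have "\<dots> = 0" unfolding \<alpha>_def using su by simp
    finally show ?thesis .
  qed
  obtain z where zc: "z \<in> carrier_vec d" and zeqv: "z - X *\<^sub>v z = b"
    using simple_eig_facts(2)[OF X d simple u(1,3,4) v(1,3,4) bc ub] by blast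
  have zeq: "\<And>i. i < d \<Longrightarrow> z $ i - (\<Sum>j<d. X $$ (i,j) * z $ j) = b $ i"
  proof -
    fix i assume i: "i < d"
    have "b $ i = (z - X *\<^sub>v z) $ i" using zeqv by simp
    also have "\<dots> = z $ i - (X *\<^sub>v z) $ i" using i zc X by simp
    finally show "z $ i - (\<Sum>j<d. X $$ (i,j) * z $ j) = b $ i"
      using mat_vec_entry[OF X zc i] by simp
  qed
  have bi: "b $ i = (\<Sum>j<d. H $$ (i,j) * v $ j) + \<alpha>" if "i < d" for i
    unfolding b_def using that by simp
  have bpos: "b $ i \<ge> \<alpha>" if i: "i < d" "v $ i = 0" for i
  proof -
    have "(\<Sum>j<d. H $$ (i,j) * v $ j) \<ge> 0"
    proof (rule sum_nonneg)
      fix j assume "j \<in> {..<d}"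
      hence j: "j < d" by simp
      show "H $$ (i,j) * v $ j \<ge> 0"
      proof (cases "v $ j = 0")
        case False
        have "X $$ (i,j) = 0" using zero_block[OF Xnn vnn vfix i j False] .
        thus ?thesis using Hz[OF i(1) j] vnn[OF j] by simp
      qed simp
    qed
    thus ?thesis using bi[OF i(1)] by simp
  qed
  have zpos: "z $ i > 0" if i: "i < d" "v $ i = 0" for i
    by (rule Sc_pos[OF X Xnn rho vnn vfix zeq bpos \<alpha> i])
  let ?F = "at_right (0::real)"
  have ev_pos: "eventually (\<lambda>s. s > 0) ?F" by (rule eventually_at_right_less)
  have ev_Y: "eventually (\<lambda>s. \<forall>i\<in>{..<d}. \<forall>j\<in>{..<d}. X $$ (i,j) + s * H $$ (i,j) \<ge> 0) ?F"
  proof (intro eventually_ball_finite ballI finite_lessThan)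
    fix i j assume i: "i \<in> {..<d}" and j: "j \<in> {..<d}"
    show "eventually (\<lambda>s. X $$ (i,j) + s * H $$ (i,j) \<ge> 0) ?F"
    proof (cases "X $$ (i,j) = 0")
      case True
      show ?thesis using ev_pos by eventually_elim (use Hz[OF _ _ True] True i j in auto)
    next
      case False
      hence pos: "X $$ (i,j) > 0" using Xnn i j by (simp add: order.not_eq_order_implies_strict)
      have "((\<lambda>s. X $$ (i,j) + s * H $$ (i,j)) \<longlongrightarrow> X $$ (i,j) + 0 * H $$ (i,j)) ?F"
        by (intro tendsto_intros)
      hence "eventually (\<lambda>s. X $$ (i,j) + s * H $$ (i,j) > 0) ?F"
        using pos by (intro order_tendstoD(1)) auto
      thus ?thesis by eventually_elim auto
    qed
  qed
  have ev_w: "eventually (\<lambda>s. \<forall>i\<in>{..<d}. v $ i + s * z $ i > 0) ?F"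
  proof (intro eventually_ball_finite ballI finite_lessThan)
    fix i assume i: "i \<in> {..<d}"
    show "eventually (\<lambda>s. v $ i + s * z $ i > 0) ?F"
    proof (cases "v $ i = 0")
      case True
      show ?thesis using ev_pos by eventually_elim (use zpos[of i] True i in auto)
    next
      case False
      hence pos: "v $ i > 0" using vnn i by (simp add: order.not_eq_order_implies_strict)
      have "((\<lambda>s. v $ i + s * z $ i) \<longlongrightarrow> v $ i + 0 * z $ i) ?F"
        by (intro tendsto_intros)
      thus ?thesis using pos by (intro order_tendstoD(1)) auto
    qed
  qed
  have ev_Hz: "eventually (\<lambda>s. \<forall>i\<in>{..<d}. s * (\<Sum>j<d. H $$ (i,j) * z $ j) < \<alpha>) ?F"
  proof (intro eventually_ball_finite ballI finite_lessThan)
    fix i assume i: "i \<in> {..<d}"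
    have "((\<lambda>s. s * (\<Sum>j<d. H $$ (i,j) * z $ j)) \<longlongrightarrow> 0 * (\<Sum>j<d. H $$ (i,j) * z $ j)) ?F"
      by (intro tendsto_intros)
    thus "eventually (\<lambda>s. s * (\<Sum>j<d. H $$ (i,j) * z $ j) < \<alpha>) ?F"
      using \<alpha> by (intro order_tendstoD(2)) auto
  qed
  have frobY: "frob_norm (X + s \<cdot>\<^sub>m H - X) = sqrt (\<Sum>i<d. \<Sum>j<d. (s * H $$ (i,j))^2)" for s
  proof -
    have "frob_norm (X + s \<cdot>\<^sub>m H - X) = sqrt (\<Sum>i<d. \<Sum>j<d. ((X + s \<cdot>\<^sub>m H - X) $$ (i,j))^2)"
      by (rule frob_norm_entries) (use X H in auto)
    also have "(\<Sum>i<d. \<Sum>j<d. ((X + s \<cdot>\<^sub>m H - X) $$ (i,j))^2) = (\<Sum>i<d. \<Sum>j<d. (s * H $$ (i,j))^2)"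
      using X H by (intro sum.cong refl) auto
    finally show ?thesis .
  qed
  have ev_fr: "eventually (\<lambda>s. frob_norm (X + s \<cdot>\<^sub>m H - X) < e) ?F"
  proof -
    have "((\<lambda>s. sqrt (\<Sum>i<d. \<Sum>j<d. (s * H $$ (i,j))^2)) \<longlongrightarrow> sqrt (\<Sum>i<d. \<Sum>j<d. (0 * H $$ (i,j))^2)) ?F"
      by (intro tendsto_intros)
    hence "eventually (\<lambda>s. sqrt (\<Sum>i<d. \<Sum>j<d. (s * H $$ (i,j))^2) < e) ?F"
      using e by (intro order_tendstoD(2)) auto
    thus ?thesis unfolding frobY .
  qed
  have ev_small: "eventually (\<lambda>s. s * HH < 2 * GH) ?F"
  proof -
    have "((\<lambda>s. s * HH) \<longlongrightarrow> 0 * HH) ?F" by (intro tendsto_intros)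
    thus ?thesis using GHpos by (intro order_tendstoD(2)) auto
  qed
  have "eventually (\<lambda>s. s > 0 \<and> (\<forall>i\<in>{..<d}. \<forall>j\<in>{..<d}. X $$ (i,j) + s * H $$ (i,j) \<ge> 0)
      \<and> (\<forall>i\<in>{..<d}. v $ i + s * z $ i > 0) \<and> (\<forall>i\<in>{..<d}. s * (\<Sum>j<d. H $$ (i,j) * z $ j) < \<alpha>)
      \<and> frob_norm (X + s \<cdot>\<^sub>m H - X) < e \<and> s * HH < 2 * GH) ?F"
    by (intro eventually_conj ev_pos ev_Y ev_w ev_Hz ev_fr ev_small)
  then obtain s where sall: "s > 0 \<and> (\<forall>i\<in>{..<d}. \<forall>j\<in>{..<d}. X $$ (i,j) + s * H $$ (i,j) \<ge> 0)
      \<and> (\<forall>i\<in>{..<d}. v $ i + s * z $ i > 0) \<and> (\<forall>i\<in>{..<d}. s * (\<Sum>j<d. H $$ (i,j) * z $ j) < \<alpha>)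
      \<and> frob_norm (X + s \<cdot>\<^sub>m H - X) < e \<and> s * HH < 2 * GH"
    using eventually_happens'[OF trivial_limit_at_right_real] by blast
  have s: "s > 0" using sall by blast
  have sY: "\<And>i j. i < d \<Longrightarrow> j < d \<Longrightarrow> X $$ (i,j) + s * H $$ (i,j) \<ge> 0" using sall by blast
  have sw: "\<And>i. i < d \<Longrightarrow> v $ i + s * z $ i > 0" using sall by blast
  have sHz: "\<And>i. i < d \<Longrightarrow> s * (\<Sum>j<d. H $$ (i,j) * z $ j) < \<alpha>" using sall by blast
  have sfr: "frob_norm (X + s \<cdot>\<^sub>m H - X) < e" using sall by blast
  have ssmall: "s * HH < 2 * GH" using sall by blast
  define Y where "Y = X + s \<cdot>\<^sub>m H"
  have Y: "Y \<in> carrier_mat d d" unfolding Y_def using X H by auto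
  have Yij: "Y $$ (i,j) = X $$ (i,j) + s * H $$ (i,j)" if "i < d" "j < d" for i j
    unfolding Y_def using that X H by simp
  have Ynn: "Y $$ (i,j) \<ge> 0" if "i < d" "j < d" for i j using sY[OF that] Yij[OF that] by simp
  have Yw: "(\<Sum>j<d. Y $$ (i,j) * (v $ j + s * z $ j)) \<le> v $ i + s * z $ i" if i: "i < d" for i
  proof -
    have "(\<Sum>j<d. Y $$ (i,j) * (v $ j + s * z $ j))
        = (\<Sum>j<d. X $$ (i,j) * v $ j) + s * (\<Sum>j<d. X $$ (i,j) * z $ j)
          + s * (\<Sum>j<d. H $$ (i,j) * v $ j) + s * (s * (\<Sum>j<d. H $$ (i,j) * z $ j))"
      using Yij i by (simp add: algebra_simps sum.distrib sum_distrib_left)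
    also have "\<dots> = v $ i + s * z $ i - s * \<alpha> + s * (s * (\<Sum>j<d. H $$ (i,j) * z $ j))"
      using vfix[OF i] zeq[OF i] bi[OF i] by (simp add: algebra_simps)
    also have "\<dots> \<le> v $ i + s * z $ i"
      using sHz[OF i] s by (simp add: mult_le_cancel_left_pos)
    finally show ?thesis .
  qed
  have "spec_rad Y \<le> 1"
    by (rule spec_rad_cert[OF Y d Ynn, of "\<lambda>i. v $ i + s * z $ i"]) (use sw Yw in auto)
  hence feasY: "feasible_P d Y" unfolding feasible_P_def nonneg_mat_def using Y Ynn by auto
  have "frob_norm (X - A) \<le> frob_norm (Y - A)" using lm[OF feasY] sfr unfolding Y_def by simp
  moreover have f1: "frob_norm (X - A) = sqrt (\<Sum>i<d. \<Sum>j<d. (X $$ (i,j) - A $$ (i,j))^2)"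
  proof -
    have "frob_norm (X - A) = sqrt (\<Sum>i<d. \<Sum>j<d. ((X - A) $$ (i,j))^2)"
      by (rule frob_norm_entries) (use X A in auto)
    also have "(\<Sum>i<d. \<Sum>j<d. ((X - A) $$ (i,j))^2) = (\<Sum>i<d. \<Sum>j<d. (X $$ (i,j) - A $$ (i,j))^2)"
      using X A by (intro sum.cong refl) auto
    finally show ?thesis .
  qed
  moreover have f2: "frob_norm (Y - A) = sqrt (\<Sum>i<d. \<Sum>j<d. (Y $$ (i,j) - A $$ (i,j))^2)"
  proof -
    have "frob_norm (Y - A) = sqrt (\<Sum>i<d. \<Sum>j<d. ((Y - A) $$ (i,j))^2)"
      by (rule frob_norm_entries) (use Y A in auto)
    also have "(\<Sum>i<d. \<Sum>j<d. ((Y - A) $$ (i,j))^2) = (\<Sum>i<d. \<Sum>j<d. (Y $$ (i,j) - A $$ (i,j))^2)"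
      using Y A by (intro sum.cong refl) auto
    finally show ?thesis .
  qed
  ultimately have le: "(\<Sum>i<d. \<Sum>j<d. (X $$ (i,j) - A $$ (i,j))^2) \<le> (\<Sum>i<d. \<Sum>j<d. (Y $$ (i,j) - A $$ (i,j))^2)"
    by simp
  have "(\<Sum>i<d. \<Sum>j<d. (Y $$ (i,j) - A $$ (i,j))^2)
      = (\<Sum>i<d. \<Sum>j<d. (X $$ (i,j) - A $$ (i,j))^2 - 2 * s * ((A $$ (i,j) - X $$ (i,j)) * H $$ (i,j)) + s^2 * (H $$ (i,j))^2)"
    using Yij by (intro sum.cong refl) (auto simp: power2_eq_square algebra_simps)
  also have "\<dots> = (\<Sum>i<d. \<Sum>j<d. (X $$ (i,j) - A $$ (i,j))^2) - 2 * s * GH + s^2 * HH"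
    unfolding GH_def HH_def by (simp add: sum.distrib sum_subtractf sum_distrib_left)
  finally have "2 * s * GH \<le> s^2 * HH" using le by simp
  hence "2 * GH \<le> s * HH" using s by (simp add: power2_eq_square mult.assoc)
  thus False using ssmall by simp
qed

lemma sum2_delta:
  fixes f :: "nat \<Rightarrow> nat \<Rightarrow> real"
  assumes "i < d" "j < d"
  shows "(\<Sum>a<d. \<Sum>b<d. f a b * (if a = i \<and> b = j then c else 0)) = f i j * c"
proof -
  have "(\<Sum>a<d. \<Sum>b<d. f a b * (if a = i \<and> b = j then c else 0)) = (\<Sum>a<d. if a = i then f a j * c else 0)"
  proof (rule sum.cong[OF refl])
    fix a assume "a \<in> {..<d}"
    show "(\<Sum>b<d. f a b * (if a = i \<and> b = j then c else 0)) = (if a = i then f a j * c else 0)"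
      using assms by (cases "a = i") (simp_all add: if_distrib[of "\<lambda>x. f _ _ * x"] cong: if_cong)
  qed
  also have "\<dots> = f i j * c" using assms by simp
  finally show ?thesis .
qed

theorem proposition1:
  fixes d :: nat and A X :: "real mat" and u v :: "real vec"
  assumes d: "d > 0"
    and A: "A \<in> carrier_mat d d" and A_nonneg: "nonneg_mat A"
    and A_irr: "irreducible_mat A" and A_rho: "spec_rad A > 1"
    and locmin: "local_min_P d A X"
    and X_rho: "spec_rad X = 1"
    and simple: "order 1 (char_poly X) = 1"
    and u: "u \<in> carrier_vec d" "nonneg_vec u" "u \<noteq> 0\<^sub>v d" "transpose_mat X *\<^sub>v u = u"
    and v: "v \<in> carrier_vec d" "nonneg_vec v" "v \<noteq> 0\<^sub>v d" "X *\<^sub>v v = v"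
  shows "\<exists>r > 0. \<exists>L \<in> carrier_mat d d. nonneg_mat L \<and> perp_nonneg L X \<and>
           A = X + r \<cdot>\<^sub>m outer_prod u v - L"
proof -
  have feas: "feasible_P d X" using locmin unfolding local_min_P_def by auto
  have X: "X \<in> carrier_mat d d" using feas unfolding feasible_P_def by auto
  have Xnn: "\<And>i j. i < d \<Longrightarrow> j < d \<Longrightarrow> X $$ (i,j) \<ge> 0"
    using feas X unfolding feasible_P_def nonneg_mat_def by auto
  have Ann: "\<And>i j. i < d \<Longrightarrow> j < d \<Longrightarrow> A $$ (i,j) \<ge> 0"
    using A_nonneg A unfolding nonneg_mat_def by auto
  have vnn: "\<And>i. i < d \<Longrightarrow> v $ i \<ge> 0" using v(1,2) unfolding nonneg_vec_def by auto
  have unn: "\<And>i. i < d \<Longrightarrow> u $ i \<ge> 0" using u(1,2) unfolding nonneg_vec_def by auto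
  have vfix: "\<And>i. i < d \<Longrightarrow> (\<Sum>j<d. X $$ (i,j) * v $ j) = v $ i"
    using mat_vec_entry[OF X v(1)] v(4) by metis
  define G where "G i j = A $$ (i,j) - X $$ (i,j)" for i j
  define uv where "uv = (\<Sum>i<d. u $ i * v $ i)"
  have uv_eq: "uv = u \<bullet> v" unfolding uv_def scalar_prod_def using v(1) by (simp add: lessThan_atLeast0)
  have uv_pos: "uv > 0"
  proof -
    have "uv \<noteq> 0" using simple_eig_facts(1)[OF X d simple u(1,3,4) v(1,3,4)] uv_eq by simp
    moreover have "uv \<ge> 0" unfolding uv_def using unn vnn by (intro sum_nonneg) auto
    ultimately show ?thesis by simp
  qed
  have uXv: "(\<Sum>i<d. \<Sum>j<d. u $ i * X $$ (i,j) * v $ j) = uv"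
    unfolding uv_def using vfix by (simp add: mult.assoc flip: sum_distrib_left)
  have FO: "(\<Sum>i<d. \<Sum>j<d. G i j * H $$ (i,j)) \<le> 0"
    if H: "H \<in> carrier_mat d d" and Hz: "\<And>i j. i < d \<Longrightarrow> j < d \<Longrightarrow> X $$ (i,j) = 0 \<Longrightarrow> H $$ (i,j) \<ge> 0"
      and Hn: "(\<Sum>i<d. \<Sum>j<d. u $ i * H $$ (i,j) * v $ j) \<le> 0" for H
  proof -
    define GH where "GH = (\<Sum>i<d. \<Sum>j<d. G i j * H $$ (i,j))"
    define GX where "GX = (\<Sum>i<d. \<Sum>j<d. G i j * X $$ (i,j))"
    have main: "GH \<le> \<gamma> * GX" if \<gamma>: "\<gamma> > 0" for \<gamma>
    proof -
      define H' where "H' = H - \<gamma> \<cdot>\<^sub>m X"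
      have H': "H' \<in> carrier_mat d d" unfolding H'_def using H X by auto
      have H'ij: "H' $$ (i,j) = H $$ (i,j) - \<gamma> * X $$ (i,j)" if "i < d" "j < d" for i j
        unfolding H'_def using that H X by simp
      have "(\<Sum>i<d. \<Sum>j<d. u $ i * H' $$ (i,j) * v $ j)
          = (\<Sum>i<d. \<Sum>j<d. u $ i * H $$ (i,j) * v $ j) - \<gamma> * (\<Sum>i<d. \<Sum>j<d. u $ i * X $$ (i,j) * v $ j)"
      proof -
        have "(\<Sum>i<d. \<Sum>j<d. u $ i * H' $$ (i,j) * v $ j)
            = (\<Sum>i<d. \<Sum>j<d. u $ i * H $$ (i,j) * v $ j - \<gamma> * (u $ i * X $$ (i,j) * v $ j))"
          by (intro sum.cong refl) (simp add: H'ij algebra_simps)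
        thus ?thesis by (simp add: sum_subtractf sum_distrib_left)
      qed
      also have "\<dots> < 0" unfolding uXv using Hn mult_pos_pos[OF \<gamma> uv_pos] by linarith
      finally have neg: "(\<Sum>i<d. \<Sum>j<d. u $ i * H' $$ (i,j) * v $ j) < 0" .
      have "(\<Sum>i<d. \<Sum>j<d. (A $$ (i,j) - X $$ (i,j)) * H' $$ (i,j)) \<le> 0"
        by (rule key_direction[OF d A locmin simple u v H' _ neg]) (use Hz H'ij in auto)
      moreover have "(\<Sum>i<d. \<Sum>j<d. (A $$ (i,j) - X $$ (i,j)) * H' $$ (i,j)) = GH - \<gamma> * GX"
      proof -
        have "(\<Sum>i<d. \<Sum>j<d. (A $$ (i,j) - X $$ (i,j)) * H' $$ (i,j))
            = (\<Sum>i<d. \<Sum>j<d. G i j * H $$ (i,j) - \<gamma> * (G i j * X $$ (i,j)))"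
          unfolding G_def by (intro sum.cong refl) (simp add: H'ij algebra_simps)
        thus ?thesis unfolding GH_def GX_def by (simp add: sum_subtractf sum_distrib_left)
      qed
      ultimately show ?thesis by simp
    qed
    show ?thesis
    proof (cases "GX \<le> 0")
      case True thus ?thesis using main[of 1] unfolding GH_def by simp
    next
      case False
      show ?thesis
      proof (rule ccontr)
        assume "\<not> ?thesis"
        hence "GH > 0" unfolding GH_def by simp
        with main[of "GH / (2 * GX)"] False show False by (simp add: field_simps)
      qed
    qed
  qed
  obtain k l where kl: "k < d" "l < d" "u $ k * X $$ (k,l) * v $ l > 0"
  proof -
    have "\<exists>k<d. \<exists>l<d. u $ k * X $$ (k,l) * v $ l > 0"
    proof (rule ccontr)
      assume "\<not> ?thesis"
      hence "\<And>k l. k < d \<Longrightarrow> l < d \<Longrightarrow> u $ k * X $$ (k,l) * v $ l \<le> 0" by (meson not_le)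
      hence "(\<Sum>i<d. \<Sum>j<d. u $ i * X $$ (i,j) * v $ j) \<le> 0" by (intro sum_nonpos) auto
      thus False using uXv uv_pos by simp
    qed
    thus ?thesis using that by blast
  qed
  have ukvl: "u $ k > 0" "v $ l > 0" "X $$ (k,l) > 0"
    using kl unn[OF kl(1)] vnn[OF kl(2)] Xnn[OF kl(1,2)]
    by (auto simp: zero_less_mult_iff order.order_iff_strict)
  define ckl where "ckl = u $ k * v $ l"
  have ckl: "ckl > 0" unfolding ckl_def using ukvl by simp
  define r where "r = G k l / ckl"
  have Gle: "G i j \<le> r * (u $ i * v $ j)" and Geq: "X $$ (i,j) > 0 \<Longrightarrow> G i j = r * (u $ i * v $ j)"
    if ij: "i < d" "j < d" for i j
  proof -
    define cij where "cij = u $ i * v $ j"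
    define H where "H = mat d d (\<lambda>(a,b). (if a = i \<and> b = j then ckl else 0) - (if a = k \<and> b = l then cij else 0))"
    have Hc: "H \<in> carrier_mat d d" unfolding H_def by simp
    have Hab: "H $$ (a,b) = (if a = i \<and> b = j then ckl else 0) - (if a = k \<and> b = l then cij else 0)"
      if "a < d" "b < d" for a b unfolding H_def using that by simp
    have sumH: "(\<Sum>a<d. \<Sum>b<d. f a b * H $$ (a,b)) = f i j * ckl - f k l * cij" for f
    proof -
      have "(\<Sum>a<d. \<Sum>b<d. f a b * H $$ (a,b))
          = (\<Sum>a<d. \<Sum>b<d. f a b * (if a = i \<and> b = j then ckl else 0)) - (\<Sum>a<d. \<Sum>b<d. f a b * (if a = k \<and> b = l then cij else 0))"
      proof -
        have "(\<Sum>a<d. \<Sum>b<d. f a b * H $$ (a,b)) = (\<Sum>a<d. \<Sum>b<d. f a b * (if a = i \<and> b = j then ckl else 0) - f a b * (if a = k \<and> b = l then cij else 0))"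
          by (intro sum.cong refl) (simp add: Hab algebra_simps del: of_bool_eq)
        thus ?thesis by (simp add: sum_subtractf)
      qed
      also have "\<dots> = f i j * ckl - f k l * cij"
        using sum2_delta[OF ij] sum2_delta[OF kl(1,2)] by simp
      finally show ?thesis .
    qed
    have uHv: "(\<Sum>a<d. \<Sum>b<d. u $ a * H $$ (a,b) * v $ b) = 0"
      using sumH[of "\<lambda>a b. u $ a * v $ b"] unfolding cij_def ckl_def by (simp add: mult_ac)
    have GH: "(\<Sum>a<d. \<Sum>b<d. G a b * H $$ (a,b)) = G i j * ckl - G k l * cij" by (rule sumH)
    have "(\<Sum>a<d. \<Sum>b<d. G a b * H $$ (a,b)) \<le> 0"
    proof (rule FO[OF Hc])
      fix a b assume ab: "a < d" "b < d" "X $$ (a,b) = 0"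
      hence "\<not> (a = k \<and> b = l)" using ukvl by auto
      thus "H $$ (a,b) \<ge> 0" using Hab[OF ab(1,2)] ckl by auto
    qed (use uHv in simp)
    hence "G i j * ckl \<le> G k l * cij" using GH by simp
    thus "G i j \<le> r * (u $ i * v $ j)" unfolding r_def cij_def using ckl by (simp add: field_simps)
    assume Xij: "X $$ (i,j) > 0"
    have mH: "(-1) \<cdot>\<^sub>m H \<in> carrier_mat d d" using Hc by simp
    have mHab: "((-1) \<cdot>\<^sub>m H) $$ (a,b) = - H $$ (a,b)" if "a < d" "b < d" for a b
      using that Hc by simp
    have "(\<Sum>a<d. \<Sum>b<d. G a b * ((-1) \<cdot>\<^sub>m H) $$ (a,b)) \<le> 0"
    proof (rule FO[OF mH])
      fix a b assume ab: "a < d" "b < d" "X $$ (a,b) = 0"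
      hence "\<not> (a = k \<and> b = l)" "\<not> (a = i \<and> b = j)" using ukvl Xij by auto
      thus "((-1) \<cdot>\<^sub>m H) $$ (a,b) \<ge> 0" using mHab[OF ab(1,2)] Hab[OF ab(1,2)] by auto
    next
      show "(\<Sum>a<d. \<Sum>b<d. u $ a * ((-1) \<cdot>\<^sub>m H) $$ (a,b) * v $ b) \<le> 0"
        using uHv mHab by (simp add: sum_negf)
    qed
    hence "(\<Sum>a<d. \<Sum>b<d. G a b * H $$ (a,b)) \<ge> 0" using mHab by (simp add: sum_negf)
    hence "G i j * ckl \<ge> G k l * cij" using GH by simp
    hence "G i j \<ge> r * (u $ i * v $ j)" unfolding r_def cij_def using ckl by (simp add: field_simps)
    thus "G i j = r * (u $ i * v $ j)" using \<open>G i j \<le> r * (u $ i * v $ j)\<close> by simp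
  qed
  have "r \<ge> 0"
  proof -
    have mX: "(-1) \<cdot>\<^sub>m X \<in> carrier_mat d d" using X by simp
    have mXab: "((-1) \<cdot>\<^sub>m X) $$ (a,b) = - X $$ (a,b)" if "a < d" "b < d" for a b
      using that X by simp
    have "(\<Sum>a<d. \<Sum>b<d. G a b * ((-1) \<cdot>\<^sub>m X) $$ (a,b)) \<le> 0"
      by (rule FO[OF mX]) (use mXab uXv uv_pos in \<open>auto simp: sum_negf\<close>)
    hence GX: "(\<Sum>a<d. \<Sum>b<d. G a b * X $$ (a,b)) \<ge> 0" using mXab by (simp add: sum_negf)
    have "(\<Sum>a<d. \<Sum>b<d. G a b * X $$ (a,b)) = (\<Sum>a<d. \<Sum>b<d. r * (u $ a * X $$ (a,b) * v $ b))"
    proof (intro sum.cong refl)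
      fix a b assume "a \<in> {..<d}" "b \<in> {..<d}"
      hence ab: "a < d" "b < d" by auto
      show "G a b * X $$ (a,b) = r * (u $ a * X $$ (a,b) * v $ b)"
      proof (cases "X $$ (a,b) = 0")
        case False
        hence "X $$ (a,b) > 0" using Xnn[OF ab] by simp
        thus ?thesis using Geq[OF ab] by (simp add: mult_ac)
      qed simp
    qed
    also have "\<dots> = r * uv" using uXv by (simp flip: sum_distrib_left)
    finally show ?thesis using GX uv_pos by (simp add: zero_le_mult_iff)
  qed
  moreover have "r \<noteq> 0"
  proof
    assume r0: "r = 0"
    have "A = X"
    proof (rule eq_matI)
      fix i j assume "i < dim_row X" "j < dim_col X"
      hence ij: "i < d" "j < d" using X by auto
      show "A $$ (i,j) = X $$ (i,j)"
      proof (cases "X $$ (i,j) > 0")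
        case True thus ?thesis using Geq[OF ij True] r0 unfolding G_def by simp
      next
        case False
        hence "X $$ (i,j) = 0" using Xnn[OF ij] by simp
        thus ?thesis using Gle[OF ij] r0 Ann[OF ij] unfolding G_def by simp
      qed
    qed (use A X in auto)
    thus False using A_rho X_rho by simp
  qed
  ultimately have rpos: "r > 0" by simp
  define L where "L = X + r \<cdot>\<^sub>m outer_prod u v - A"
  have op: "outer_prod u v \<in> carrier_mat d d" unfolding outer_prod_def using u(1) v(1) by auto
  have opij: "outer_prod u v $$ (i,j) = u $ i * v $ j" if "i < d" "j < d" for i j
    unfolding outer_prod_def using that u(1) v(1) by auto
  have Lc: "L \<in> carrier_mat d d" unfolding L_def using X A op by auto
  have Lij: "L $$ (i,j) = r * (u $ i * v $ j) - G i j" if "i < d" "j < d" for i j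
    unfolding L_def G_def using that X A op opij by simp
  show ?thesis
  proof (intro exI[of _ r] conjI rpos bexI[of _ L] Lc)
    show "nonneg_mat L" unfolding nonneg_mat_def using Lc Lij Gle by auto
    show "perp_nonneg L X" unfolding perp_nonneg_def using X Lij Geq by auto
    show "A = X + r \<cdot>\<^sub>m outer_prod u v - L"
      by (rule eq_matI) (use A X op Lc Lij opij in \<open>auto simp: G_def\<close>)
  qed
qed

end
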